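(* Let $\Gamma$ be a finite connected graph and $f_1$ an eigenfunction of its normalized Laplacian for the eigenvalue $1$. Partition the vertex set of $\Gamma$ into sets $\Sigma_0,\Sigma_1,\Sigma_2$ such that no edge of $\Gamma$ joins a vertex of $\Sigma_1$ to a vertex of $\Sigma_2$. Assign each edge of $\Gamma$ with both endpoints in $\Sigma_0$ to exactly one of two classes $E_1,E_2$. Let $\Gamma_1$ be the graph with vertex set $\Sigma_1\cup\Sigma_0$ whose edges are the edges of $\Gamma$ with at least one endpoint in $\Sigma_1$ and both endpoints in $\Sigma_1\cup\Sigma_0$, together with $E_1$; let $\Gamma_2$ be a disjoint graph with vertex set a copy of $\Sigma_2\cup\Sigma_0$ whose edges are the (copies of) edges of $\Gamma$ with at least one endpoint in $\Sigma_2$ and both endpoints in $\Sigma_2\cup\Sigma_0$, together with (copies of) $E_2$. Form $\Gamma_0$ from the disjoint union of $\Gamma_1$ and $\Gamma_2$ by adding, for each $q\in\Sigma_0$, a new vertex $w_q$ joined by edges to the copy of $q$ in $\Gamma_1$ and to the copy of $q$ in $\Gamma_2$. Then $1$ is an eigenvalue of the normalized Laplacian of $\Gamma_0$, with an eigenfunction that agrees with $f_1$ on $\Gamma_1$.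
   Context: For a finite simple graph without isolated vertices, write $i\sim j$ for adjacency and $n_i$ for the degree of $i$. The normalized Laplacian acts on real functions $v$ on the vertices by $\Delta v(i)=v(i)-\frac{1}{n_i}\sum_{j\sim i}v(j)$; $\lambda$ is an eigenvalue with eigenfunction $u$ if $u\not\equiv 0$ and $\frac{1}{n_i}\sum_{j\sim i}u(j)=(1-\lambda)u(i)$ for all $i$. For $\lambda=1$ this says $\sum_{j\sim i}u(j)=0$ for all $i$. *)

theory Defs
  imports Complex_Main
begin

definition simple_graph :: "'a set \<Rightarrow> ('a \<Rightarrow> 'a \<Rightarrow> bool) \<Rightarrow> bool" where
  "simple_graph V E \<longleftrightarrow> finite V \<and> (\<forall>x y. E x y \<longrightarrow> x \<in> V \<and> y \<in> V)
     \<and> (\<forall>x y. E x y \<longrightarrow> E y x) \<and> (\<forall>x. \<not> E x x)"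

definition no_isolated :: "'a set \<Rightarrow> ('a \<Rightarrow> 'a \<Rightarrow> bool) \<Rightarrow> bool" where
  "no_isolated V E \<longleftrightarrow> (\<forall>i\<in>V. \<exists>j. E i j)"

definition connected_graph :: "'a set \<Rightarrow> ('a \<Rightarrow> 'a \<Rightarrow> bool) \<Rightarrow> bool" where
  "connected_graph V E \<longleftrightarrow> (\<forall>x\<in>V. \<forall>y\<in>V. E\<^sup>*\<^sup>* x y)"

definition nbrs :: "'a set \<Rightarrow> ('a \<Rightarrow> 'a \<Rightarrow> bool) \<Rightarrow> 'a \<Rightarrow> 'a set" where
  "nbrs V E i = {j \<in> V. E i j}"

definition degree :: "'a set \<Rightarrow> ('a \<Rightarrow> 'a \<Rightarrow> bool) \<Rightarrow> 'a \<Rightarrow> nat" where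
  "degree V E i = card (nbrs V E i)"

definition is_eigenfunction ::
  "'a set \<Rightarrow> ('a \<Rightarrow> 'a \<Rightarrow> bool) \<Rightarrow> real \<Rightarrow> ('a \<Rightarrow> real) \<Rightarrow> bool" where
  "is_eigenfunction V E lam u \<longleftrightarrow> (\<exists>i\<in>V. u i \<noteq> 0) \<and>
     (\<forall>i\<in>V. (1 / real (degree V E i)) * (\<Sum>j\<in>nbrs V E i. u j) = (1 - lam) * u i)"

text \<open>Vertices of Gamma_0: L x = copy of x in Gamma_1, R x = copy of x in Gamma_2,
  W q = the new vertex w_q.\<close>
datatype 'a vtx = L 'a | R 'a | W 'a

definition split_vertices :: "'a set \<Rightarrow> 'a set \<Rightarrow> 'a set \<Rightarrow> 'a vtx set" where
  "split_vertices S0 S1 S2 = L ` (S1 \<union> S0) \<union> R ` (S2 \<union> S0) \<union> W ` S0"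

fun split_edges ::
  "('a \<Rightarrow> 'a \<Rightarrow> bool) \<Rightarrow> 'a set \<Rightarrow> 'a set \<Rightarrow> 'a set \<Rightarrow>
   ('a \<Rightarrow> 'a \<Rightarrow> bool) \<Rightarrow> ('a \<Rightarrow> 'a \<Rightarrow> bool) \<Rightarrow> 'a vtx \<Rightarrow> 'a vtx \<Rightarrow> bool" where
  "split_edges E S0 S1 S2 E1 E2 (L x) (L y) \<longleftrightarrow>
     x \<in> S1 \<union> S0 \<and> y \<in> S1 \<union> S0 \<and> E x y \<and> (x \<in> S1 \<or> y \<in> S1 \<or> E1 x y)"
| "split_edges E S0 S1 S2 E1 E2 (R x) (R y) \<longleftrightarrow>
     x \<in> S2 \<union> S0 \<and> y \<in> S2 \<union> S0 \<and> E x y \<and> (x \<in> S2 \<or> y \<in> S2 \<or> E2 x y)"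
| "split_edges E S0 S1 S2 E1 E2 (L x) (W q) \<longleftrightarrow> q \<in> S0 \<and> x = q"
| "split_edges E S0 S1 S2 E1 E2 (W q) (L x) \<longleftrightarrow> q \<in> S0 \<and> x = q"
| "split_edges E S0 S1 S2 E1 E2 (R x) (W q) \<longleftrightarrow> q \<in> S0 \<and> x = q"
| "split_edges E S0 S1 S2 E1 E2 (W q) (R x) \<longleftrightarrow> q \<in> S0 \<and> x = q"
| "split_edges E S0 S1 S2 E1 E2 _ _ \<longleftrightarrow> False"

end

theory Submission
  imports Defs
begin

lemma nbrs_L:
  assumes "x \<in> S1 \<union> S0"
  shows "nbrs (split_vertices S0 S1 S2) (split_edges E S0 S1 S2 E1 E2) (L x) =
    L ` {y\<in>S1 \<union> S0. E x y \<and> (x\<in>S1 \<or> y\<in>S1 \<or> E1 x y)} \<union> (if x \<in> S0 then {W x} else {})"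
proof (rule set_eqI)
  fix v show "v \<in> nbrs (split_vertices S0 S1 S2) (split_edges E S0 S1 S2 E1 E2) (L x) \<longleftrightarrow>
    v \<in> L ` {y\<in>S1 \<union> S0. E x y \<and> (x\<in>S1 \<or> y\<in>S1 \<or> E1 x y)} \<union> (if x \<in> S0 then {W x} else {})"
    using assms by (cases v) (auto simp: nbrs_def split_vertices_def)
qed

lemma nbrs_R:
  assumes "x \<in> S2 \<union> S0"
  shows "nbrs (split_vertices S0 S1 S2) (split_edges E S0 S1 S2 E1 E2) (R x) =
    R ` {y\<in>S2 \<union> S0. E x y \<and> (x\<in>S2 \<or> y\<in>S2 \<or> E2 x y)} \<union> (if x \<in> S0 then {W x} else {})"
proof (rule set_eqI)
  fix v show "v \<in> nbrs (split_vertices S0 S1 S2) (split_edges E S0 S1 S2 E1 E2) (R x) \<longleftrightarrow>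
    v \<in> R ` {y\<in>S2 \<union> S0. E x y \<and> (x\<in>S2 \<or> y\<in>S2 \<or> E2 x y)} \<union> (if x \<in> S0 then {W x} else {})"
    using assms by (cases v) (auto simp: nbrs_def split_vertices_def)
qed

lemma nbrs_W:
  assumes "q \<in> S0"
  shows "nbrs (split_vertices S0 S1 S2) (split_edges E S0 S1 S2 E1 E2) (W q) = {L q, R q}"
proof (rule set_eqI)
  fix v show "v \<in> nbrs (split_vertices S0 S1 S2) (split_edges E S0 S1 S2 E1 E2) (W q) \<longleftrightarrow> v \<in> {L q, R q}"
    using assms by (cases v) (auto simp: nbrs_def split_vertices_def)
qed

theorem theorem5:
  fixes V :: "'a set" and E :: "'a \<Rightarrow> 'a \<Rightarrow> bool"
    and S0 S1 S2 :: "'a set" and E1 E2 :: "'a \<Rightarrow> 'a \<Rightarrow> bool"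
    and f1 :: "'a \<Rightarrow> real"
  assumes graph: "simple_graph V E"
    and noiso: "no_isolated V E"
    and conn: "connected_graph V E"
    and eig: "is_eigenfunction V E 1 f1"
    and cover: "S0 \<union> S1 \<union> S2 = V"
    and disj01: "S0 \<inter> S1 = {}" and disj02: "S0 \<inter> S2 = {}" and disj12: "S1 \<inter> S2 = {}"
    and no12: "\<And>x y. x \<in> S1 \<Longrightarrow> y \<in> S2 \<Longrightarrow> \<not> E x y"
    and E1_sub: "\<And>x y. E1 x y \<Longrightarrow> E x y \<and> x \<in> S0 \<and> y \<in> S0"
    and E2_sub: "\<And>x y. E2 x y \<Longrightarrow> E x y \<and> x \<in> S0 \<and> y \<in> S0"
    and E1_sym: "\<And>x y. E1 x y \<Longrightarrow> E1 y x"
    and E2_sym: "\<And>x y. E2 x y \<Longrightarrow> E2 y x"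
    and E12_part: "\<And>x y. x \<in> S0 \<Longrightarrow> y \<in> S0 \<Longrightarrow> E x y \<Longrightarrow> (E1 x y \<longleftrightarrow> \<not> E2 x y)"
  shows "\<exists>g. is_eigenfunction (split_vertices S0 S1 S2) (split_edges E S0 S1 S2 E1 E2) 1 g
            \<and> (\<forall>x \<in> S1 \<union> S0. g (L x) = f1 x)"
proof -
  define A1 where "A1 x = {y\<in>S1 \<union> S0. E x y \<and> (x\<in>S1 \<or> y\<in>S1 \<or> E1 x y)}" for x
  define A2 where "A2 x = {y\<in>S2 \<union> S0. E x y \<and> (x\<in>S2 \<or> y\<in>S2 \<or> E2 x y)}" for x
  define g where "g v = (case v of L x \<Rightarrow> f1 x | R x \<Rightarrow> - f1 x | W q \<Rightarrow> - (\<Sum>y\<in>A1 q. f1 y))" for v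
  let ?N = "split_vertices S0 S1 S2" and ?SE = "split_edges E S0 S1 S2 E1 E2"
  have finV: "finite V" using graph by (simp add: simple_graph_def)
  have EV: "E x y \<Longrightarrow> x \<in> V \<and> y \<in> V" for x y using graph by (simp add: simple_graph_def)
  have finS: "finite S0" "finite S1" "finite S2" using finV cover by auto
  have fin1: "finite (A1 x)" for x
    by (rule finite_subset[of _ "S1 \<union> S0"]) (auto simp: A1_def finS)
  have fin2: "finite (A2 x)" for x
    by (rule finite_subset[of _ "S2 \<union> S0"]) (auto simp: A2_def finS)
  have eigall: "\<forall>i\<in>V. (1 / real (degree V E i)) * (\<Sum>j\<in>nbrs V E i. f1 j) = (1 - 1) * f1 i"
    using eig unfolding is_eigenfunction_def by blast
  have sum0: "(\<Sum>y\<in>nbrs V E x. f1 y) = 0" if "x \<in> V" for x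
  proof -
    have "\<exists>j. E x j" using noiso that by (simp add: no_isolated_def)
    then obtain j where "E x j" by (elim exE)
    hence "j \<in> nbrs V E x" using EV unfolding nbrs_def by simp
    moreover have "finite (nbrs V E x)" using finV unfolding nbrs_def by simp
    ultimately have "card (nbrs V E x) \<noteq> 0" by auto
    hence d: "real (degree V E x) \<noteq> 0" unfolding degree_def by simp
    have "(1 / real (degree V E x)) * (\<Sum>y\<in>nbrs V E x. f1 y) = 0"
      using bspec[OF eigall that] by simp
    thus ?thesis using d by simp
  qed
  have Vc: "y \<in> V \<longleftrightarrow> y \<in> S0 \<or> y \<in> S1 \<or> y \<in> S2" for y using cover by auto
  have nS1: "nbrs V E x = A1 x" if "x \<in> S1" for x
    using that no12 EV disj01 disj12 unfolding nbrs_def A1_def Vc by auto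
  have sym: "E x y \<Longrightarrow> E y x" for x y using graph by (simp add: simple_graph_def)
  have nS2: "nbrs V E x = A2 x" if "x \<in> S2" for x
    using that no12 EV disj02 disj12 sym unfolding nbrs_def A2_def Vc by fastforce
  have nS0: "nbrs V E x = A1 x \<union> A2 x" "A1 x \<inter> A2 x = {}" if "x \<in> S0" for x
  proof -
    show "nbrs V E x = A1 x \<union> A2 x"
      using that EV disj01 disj02 E12_part unfolding nbrs_def A1_def A2_def Vc by auto
    show "A1 x \<inter> A2 x = {}"
      using that disj01 disj02 disj12 E12_part unfolding A1_def A2_def by auto
  qed
  have zero: "(\<Sum>j\<in>nbrs ?N ?SE i. g j) = 0" if "i \<in> ?N" for i
  proof (cases i)
    case (L x)
    hence x: "x \<in> S1 \<union> S0" using that by (auto simp: split_vertices_def)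
    have nb: "nbrs ?N ?SE i = L ` A1 x \<union> (if x \<in> S0 then {W x} else {})"
      unfolding L A1_def by (rule nbrs_L[OF x])
    have s: "(\<Sum>j\<in>L ` A1 x. g j) = (\<Sum>y\<in>A1 x. f1 y)"
      by (subst sum.reindex) (auto simp: inj_on_def g_def)
    show ?thesis
    proof (cases "x \<in> S0")
      case True
      have "W x \<notin> L ` A1 x" by auto
      then show ?thesis using True x s fin1[of x] unfolding nb
        by (simp add: g_def)
    next
      case False
      hence "x \<in> S1" using x by auto
      then show ?thesis using False x s sum0[of x] nS1[of x] cover unfolding nb
        by auto
    qed
  next
    case (R x)
    hence x: "x \<in> S2 \<union> S0" using that by (auto simp: split_vertices_def)
    have nb: "nbrs ?N ?SE i = R ` A2 x \<union> (if x \<in> S0 then {W x} else {})"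
      unfolding R A2_def by (rule nbrs_R[OF x])
    have s: "(\<Sum>j\<in>R ` A2 x. g j) = - (\<Sum>y\<in>A2 x. f1 y)"
      by (subst sum.reindex) (auto simp: inj_on_def g_def sum_negf)
    show ?thesis
    proof (cases "x \<in> S0")
      case True
      have "W x \<notin> R ` A2 x" by auto
      moreover have "(\<Sum>y\<in>A1 x. f1 y) + (\<Sum>y\<in>A2 x. f1 y) = 0"
      proof -
        have "(\<Sum>y\<in>A1 x \<union> A2 x. f1 y) = (\<Sum>y\<in>A1 x. f1 y) + (\<Sum>y\<in>A2 x. f1 y)"
          by (rule sum.union_disjoint[OF fin1 fin2 nS0(2)[OF True]])
        moreover have "x \<in> V" using True cover by auto
        ultimately show ?thesis using sum0[of x] nS0(1)[OF True] by simp
      qed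
      ultimately show ?thesis using True x s fin2[of x] unfolding nb
        by (simp add: g_def)
    next
      case False
      hence "x \<in> S2" using x by auto
      then show ?thesis using False x s sum0[of x] nS2[of x] cover unfolding nb
        by auto
    qed
  next
    case (W q)
    hence q: "q \<in> S0" using that by (auto simp: split_vertices_def)
    show ?thesis unfolding W nbrs_W[OF q] by (simp add: g_def)
  qed
  have "is_eigenfunction ?N ?SE 1 g"
    unfolding is_eigenfunction_def
  proof
    obtain i where i: "i \<in> V" "f1 i \<noteq> 0" using eig by (auto simp: is_eigenfunction_def)
    show "\<exists>i\<in>?N. g i \<noteq> 0"
    proof (cases "i \<in> S1 \<union> S0")
      case True
      then show ?thesis using i by (intro bexI[of _ "L i"]) (auto simp: g_def split_vertices_def)
    next
      case False
      then show ?thesis using i cover by (intro bexI[of _ "R i"]) (auto simp: g_def split_vertices_def)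
    qed
    show "\<forall>i\<in>?N. 1 / real (degree ?N ?SE i) * (\<Sum>j\<in>nbrs ?N ?SE i. g j) = (1 - 1) * g i"
      using zero by simp
  qed
  moreover have "\<forall>x \<in> S1 \<union> S0. g (L x) = f1 x" by (simp add: g_def)
  ultimately show ?thesis by blast
qed

end
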